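(* For all $k\ge1$, as formal power series in $t$, $$\sum_{n\ge k}\mathbf{Sf}_{n,k}(p,q)\,t^n=\frac{t^k}{(1-F_1(p,q)t)(1-F_2(p,q)t)\cdots(1-F_k(p,q)t)}.$$
   Context: $F_1(p,q)=q$, $F_2(p,q)=q^2$ and $F_m(p,q)=qF_{m-1}(p,q)+pF_{m-2}(p,q)$ for $m\ge3$. Let $(x)_{\downarrow_{F,p,q,0}}=1$ and $(x)_{\downarrow_{F,p,q,k}}=x(x-F_1(p,q))\cdots(x-F_{k-1}(p,q))$ for $k\ge1$. Define $\mathbf{Sf}_{n,k}(p,q)$ for $0\le k\le n$ by $x^n=\sum_{k=0}^n\mathbf{Sf}_{n,k}(p,q)(x)_{\downarrow_{F,p,q,k}}$. *)

theory Defs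
  imports "HOL-Computational_Algebra.Polynomial" "HOL-Computational_Algebra.Formal_Power_Series"
begin

fun Fpq :: "nat \<Rightarrow> 'a::comm_ring_1 \<Rightarrow> 'a \<Rightarrow> 'a" where
  "Fpq 0 p q = 0"
| "Fpq (Suc 0) p q = q"
| "Fpq (Suc (Suc 0)) p q = q ^ 2"
| "Fpq (Suc (Suc (Suc m))) p q = q * Fpq (Suc (Suc m)) p q + p * Fpq (Suc m) p q"

definition ffall :: "'a::comm_ring_1 \<Rightarrow> 'a \<Rightarrow> nat \<Rightarrow> 'a poly" where
  "ffall p q k = (if k = 0 then 1 else [:0, 1:] * (\<Prod>i\<in>{1..<k}. [:- Fpq i p q, 1:]))"

definition Sf :: "nat \<Rightarrow> nat \<Rightarrow> 'a::comm_ring_1 \<Rightarrow> 'a \<Rightarrow> 'a" where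
  "Sf n k p q = (THE c. (\<forall>j>n. c j = 0) \<and>
       [:0, 1:] ^ n = (\<Sum>j\<le>n. smult (c j) (ffall p q j))) k"

end

theory Submission
  imports Defs
begin

fun SS :: "'a::field \<Rightarrow> 'a \<Rightarrow> nat \<Rightarrow> nat \<Rightarrow> 'a" where
  "SS p q 0 k = (if k = 0 then 1 else 0)"
| "SS p q (Suc n) k = (if k = 0 then 0 else SS p q n (k - 1)) + Fpq k p q * SS p q n k"

lemma ffall_Suc: "ffall p q (Suc j) = ffall p q j * [:- Fpq j p q, 1:]"
proof (cases "j = 0")
  case True thus ?thesis by (simp add: ffall_def)
next
  case False
  hence "prod (\<lambda>i. [:- Fpq i p q, 1:]) {1..<Suc j} = prod (\<lambda>i. [:- Fpq i p q, 1:]) {1..<j} * [:- Fpq j p q, 1:]"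
    by (simp add: prod.atLeastLessThan_Suc)
  thus ?thesis using False by (simp add: ffall_def mult.assoc)
qed

lemma ffall_deg: "degree (ffall p q j :: 'a::field poly) = j \<and> lead_coeff (ffall p q j) = 1"
proof (induction j)
  case 0 thus ?case by (simp add: ffall_def)
next
  case (Suc j)
  have nz: "ffall p q j \<noteq> 0" using Suc by auto
  have nz2: "[:- Fpq j p q, 1:] \<noteq> (0::'a poly)" by simp
  have d: "degree (ffall p q j) = j" and l: "coeff (ffall p q j) j = 1" using Suc by auto
  have h: "coeff (ffall p q j) (Suc j) = 0" using d by (simp add: coeff_eq_0)
  show ?case unfolding ffall_Suc
    by (simp only: degree_mult_eq[OF nz nz2] lead_coeff_mult) (simp add: d l h)
qed

lemma ffall_coeff_high: "j < m \<Longrightarrow> coeff (ffall p q j :: 'a::field poly) m = 0"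
  using ffall_deg[of p q j] by (simp add: coeff_eq_0)

lemma SS_zero: "n < k \<Longrightarrow> SS p q n k = 0"
  by (induction n arbitrary: k) auto

lemma SS_repr: "[:0, 1:] ^ n = (\<Sum>j\<le>n. smult (SS p q n j) (ffall p q j))"
proof (induction n)
  case 0 thus ?case by (simp add: ffall_def)
next
  case (Suc n)
  have xf: "[:0,1:] * ffall p q j = ffall p q (Suc j) + smult (Fpq j p q) (ffall p q j)" for j
    unfolding ffall_Suc by (simp add: algebra_simps)
  have "[:0, 1:] ^ Suc n = (\<Sum>j\<le>n. smult (SS p q n j) ([:0,1:] * ffall p q j))"
    using Suc by (simp add: sum_distrib_left mult_smult_right)
  also have "\<dots> = (\<Sum>j\<le>n. smult (SS p q n j) (ffall p q (Suc j))) + (\<Sum>j\<le>n. smult (Fpq j p q * SS p q n j) (ffall p q j))"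
    unfolding xf by (simp add: smult_add_right sum.distrib mult.commute)
  also have "(\<Sum>j\<le>n. smult (SS p q n j) (ffall p q (Suc j))) = (\<Sum>j\<le>Suc n. smult (if j = 0 then 0 else SS p q n (j - 1)) (ffall p q j))"
    by (subst sum.atMost_Suc_shift) simp
  also have "(\<Sum>j\<le>n. smult (Fpq j p q * SS p q n j) (ffall p q j)) = (\<Sum>j\<le>Suc n. smult (Fpq j p q * SS p q n j) (ffall p q j))"
    by (simp add: SS_zero)
  finally show ?case by (simp add: sum.distrib[symmetric] smult_add_left)
qed

lemma uniq: "(\<Sum>j\<le>n. smult (e j) (ffall p q j :: 'a::field poly)) = 0 \<Longrightarrow> \<forall>j\<le>n. e j = 0"
proof (induction n)
  case 0 thus ?case by (simp add: ffall_def)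
next
  case (Suc n)
  have "coeff (ffall p q (Suc n) :: 'a poly) (Suc n) = 1" using ffall_deg[of p q "Suc n"] by metis
  moreover have "coeff (\<Sum>j\<le>n. smult (e j) (ffall p q j)) (Suc n) = 0"
    unfolding coeff_sum by (simp add: ffall_coeff_high)
  ultimately have "coeff (\<Sum>j\<le>Suc n. smult (e j) (ffall p q j)) (Suc n) = e (Suc n)"
    by simp
  hence e0: "e (Suc n) = 0" using Suc.prems by (metis coeff_0)
  hence "(\<Sum>j\<le>n. smult (e j) (ffall p q j)) = 0" using Suc.prems by simp
  with Suc.IH e0 show ?case using le_Suc_eq by auto
qed

lemma Sf_SS: "Sf n k p q = SS p q n k"
proof -
  have "(THE c. (\<forall>j>n. c j = 0) \<and> [:0, 1:] ^ n = (\<Sum>j\<le>n. smult (c j) (ffall p q j))) = SS p q n"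
  proof (rule the_equality)
    show "(\<forall>j>n. SS p q n j = 0) \<and> [:0, 1:] ^ n = (\<Sum>j\<le>n. smult (SS p q n j) (ffall p q j))"
      using SS_repr SS_zero by blast
  next
    fix c assume c: "(\<forall>j>n. c j = 0) \<and> [:0, 1:] ^ n = (\<Sum>j\<le>n. smult (c j) (ffall p q j))"
    have "(\<Sum>j\<le>n. smult (c j - SS p q n j) (ffall p q j)) = 0"
      using c SS_repr[of n p q] by (simp add: smult_diff_left sum_subtractf)
    from uniq[OF this] show "c = SS p q n"
      using c SS_zero[of n _ p q] by (metis eq_iff_diff_eq_0 ext not_le)
  qed
  thus ?thesis unfolding Sf_def by simp
qed

lemma gen: "Abs_fps (\<lambda>n. SS p q n k) * (\<Prod>i\<in>{1..k}. (1 - fps_const (Fpq i p q) * fps_X)) = fps_X ^ k"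
proof (induction k)
  case 0
  have "Abs_fps (\<lambda>n. SS p q n 0) = 1"
    by (rule fps_ext) (case_tac n, auto)
  thus ?case by simp
next
  case (Suc k)
  have "Abs_fps (\<lambda>n. SS p q n (Suc k)) * (1 - fps_const (Fpq (Suc k) p q) * fps_X) = fps_X * Abs_fps (\<lambda>n. SS p q n k)"
  proof (rule fps_ext)
    fix n show "fps_nth (Abs_fps (\<lambda>n. SS p q n (Suc k)) * (1 - fps_const (Fpq (Suc k) p q) * fps_X)) n = fps_nth (fps_X * Abs_fps (\<lambda>n. SS p q n k)) n"
    proof -
      have "Abs_fps (\<lambda>n. SS p q n (Suc k)) * (1 - fps_const (Fpq (Suc k) p q) * fps_X)
        = Abs_fps (\<lambda>n. SS p q n (Suc k)) - fps_const (Fpq (Suc k) p q) * (fps_X * Abs_fps (\<lambda>n. SS p q n (Suc k)))"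
        by (simp add: algebra_simps)
      thus ?thesis by (cases n) (simp_all only: fps_sub_nth fps_X_mult_nth fps_const_mult_left fps_nth_Abs_fps, simp_all)
    qed
  qed
  hence "Abs_fps (\<lambda>n. SS p q n (Suc k)) * (\<Prod>i\<in>{1..Suc k}. (1 - fps_const (Fpq i p q) * fps_X))
     = fps_X * (Abs_fps (\<lambda>n. SS p q n k) * (\<Prod>i\<in>{1..k}. (1 - fps_const (Fpq i p q) * fps_X)))"
    by (simp add: prod.nat_ivl_Suc' mult_ac)
  with Suc.IH show ?case by simp
qed

theorem theorem10:
  fixes p q :: "'a::field" and k :: nat
  assumes "k \<ge> 1"
  shows "Abs_fps (\<lambda>n. if n \<ge> k then Sf n k p q else 0)
         = fps_X ^ k / (\<Prod>i\<in>{1..k}. (1 - fps_const (Fpq i p q) * fps_X))"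
proof -
  have A: "Abs_fps (\<lambda>n. if n \<ge> k then Sf n k p q else 0) = Abs_fps (\<lambda>n. SS p q n k)"
    by (rule fps_ext) (auto simp: Sf_SS SS_zero)
  have nz: "(\<Prod>i\<in>{1..k}. (1 - fps_const (Fpq i p q) * fps_X)) \<noteq> 0"
  proof -
    have "(1 - fps_const (Fpq i p q) * fps_X) \<noteq> (0::'a fps)" for i
    proof
      assume "(1 - fps_const (Fpq i p q) * fps_X) = (0::'a fps)"
      hence "fps_nth (1 - fps_const (Fpq i p q) * fps_X) 0 = (0::'a)" by simp
      thus False by simp
    qed
    thus ?thesis by (simp add: prod_zero_iff)
  qed
  show ?thesis unfolding A gen[of p q k, symmetric] using nz by (rule nonzero_mult_div_cancel_right[symmetric])
qed

end
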